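(* There are at least $2^{\mathfrak d}$ many totally imperfect Menger subsets of $2^\omega$.
   Context: $\mathfrak d$ is the least size of a dominating family in $(\omega^\omega,\le^* )$, where $a\le^*b$ means $\{n:a(n)>b(n)\}$ is finite. Menger: for every sequence $(\mathcal U_n)$ of open covers there are finite $\mathcal F_n\subseteq\mathcal U_n$ with $\bigcup_n\mathcal F_n$ a cover. Totally imperfect: contains no homeomorphic copy of $2^\omega$. *)

theory Defs
  imports "HOL-Analysis.Analysis" "HOL-Library.Equipollence"
begin

definition cantor_top :: "(nat \<Rightarrow> bool) topology" where
  "cantor_top = product_topology (\<lambda>_. discrete_topology (UNIV :: bool set)) (UNIV :: nat set)"

definition le_star :: "(nat \<Rightarrow> nat) \<Rightarrow> (nat \<Rightarrow> nat) \<Rightarrow> bool" where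
  "le_star a b \<longleftrightarrow> finite {n. a n > b n}"

definition dominating :: "(nat \<Rightarrow> nat) set \<Rightarrow> bool" where
  "dominating D \<longleftrightarrow> (\<forall>f. \<exists>g\<in>D. le_star f g)"

text \<open>D witnesses the cardinal d: a dominating family of least size.\<close>
definition dominating_min :: "(nat \<Rightarrow> nat) set \<Rightarrow> bool" where
  "dominating_min D \<longleftrightarrow> dominating D \<and> (\<forall>D'. dominating D' \<longrightarrow> D \<lesssim> D')"

definition menger_space :: "'a topology \<Rightarrow> bool" where
  "menger_space T \<longleftrightarrow>
     (\<forall>U :: nat \<Rightarrow> 'a set set.
        (\<forall>n. (\<forall>V\<in>U n. openin T V) \<and> \<Union>(U n) = topspace T) \<longrightarrow>
        (\<exists>F. (\<forall>n. finite (F n) \<and> F n \<subseteq> U n) \<and> \<Union>(\<Union>n. F n) = topspace T))"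

definition totally_imperfect :: "(nat \<Rightarrow> bool) set \<Rightarrow> bool" where
  "totally_imperfect X \<longleftrightarrow>
     \<not> (\<exists>Y. Y \<subseteq> X \<and> subtopology cantor_top Y homeomorphic_space cantor_top)"

end

theory Submission
  imports Defs
begin

definition cyl :: "(nat \<Rightarrow> bool) \<Rightarrow> nat \<Rightarrow> (nat \<Rightarrow> bool) set" where
  "cyl z m = {y. \<forall>i<m. y i = z i}"

lemma topspace_cantor [simp]: "topspace cantor_top = UNIV"
  by (simp add: cantor_top_def topspace_product_topology)

lemma compact_cantor: "compact_space cantor_top"
  unfolding cantor_top_def compact_space_product_topology
  by (simp add: compact_space_discrete_topology)

lemma open_cantor: "openin cantor_top W \<longleftrightarrow> (\<forall>z\<in>W. \<exists>m. cyl z m \<subseteq> W)"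
proof
  assume "openin cantor_top W"
  then have H: "\<forall>x\<in>W. \<exists>U. finite {i. U i \<noteq> UNIV} \<and> x \<in> Pi\<^sub>E UNIV U \<and> Pi\<^sub>E UNIV U \<subseteq> W"
    by (simp add: cantor_top_def openin_product_topology_alt)
  show "\<forall>z\<in>W. \<exists>m. cyl z m \<subseteq> W"
  proof
    fix z assume "z \<in> W"
    then obtain U where U: "finite {i. U i \<noteq> UNIV}" "z \<in> Pi\<^sub>E UNIV U" "Pi\<^sub>E UNIV U \<subseteq> W"
      using H by blast
    obtain m where m: "\<forall>i\<in>{i. U i \<noteq> UNIV}. i < m"
      using U(1) finite_nat_bounded by (meson lessThan_iff subset_eq)
    have "cyl z m \<subseteq> Pi\<^sub>E UNIV U"
    proof
      fix y assume y: "y \<in> cyl z m"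
      have "y i \<in> U i" for i
      proof (cases "U i = UNIV")
        case True then show ?thesis by simp
      next
        case False then have "i < m" using m by blast
        then have "y i = z i" using y by (simp add: cyl_def)
        moreover have "z i \<in> U i" using U(2) by (simp add: PiE_iff)
        ultimately show ?thesis by simp
      qed
      then show "y \<in> Pi\<^sub>E UNIV U" by (simp add: PiE_iff)
    qed
    then show "\<exists>m. cyl z m \<subseteq> W" using U(3) by blast
  qed
next
  assume H: "\<forall>z\<in>W. \<exists>m. cyl z m \<subseteq> W"
  show "openin cantor_top W"
    unfolding cantor_top_def openin_product_topology_alt
  proof (intro ballI)
    fix z assume "z \<in> W"
    then obtain m where m: "cyl z m \<subseteq> W" using H by blast
    define U where "U i = (if i < m then {z i} else UNIV)" for i
    have "{i. U i \<noteq> UNIV} \<subseteq> {..<m}" by (auto simp: U_def)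
    then have "finite {i \<in> UNIV. U i \<noteq> topspace (discrete_topology UNIV)}"
      by (auto intro: finite_subset)
    moreover have "Pi\<^sub>E UNIV U = cyl z m"
    proof (rule set_eqI)
      fix y
      have "y \<in> Pi\<^sub>E UNIV U \<longleftrightarrow> (\<forall>i. y i \<in> U i)" by (simp add: PiE_iff)
      also have "\<dots> \<longleftrightarrow> (\<forall>i<m. y i = z i)" by (simp add: U_def)
      also have "\<dots> \<longleftrightarrow> y \<in> cyl z m" by (simp add: cyl_def)
      finally show "y \<in> Pi\<^sub>E UNIV U \<longleftrightarrow> y \<in> cyl z m" .
    qed
    moreover have "\<forall>i\<in>UNIV. openin (discrete_topology UNIV) (U i)" by simp
    moreover have "z \<in> cyl z m" by (simp add: cyl_def)
    ultimately show "\<exists>U. finite {i \<in> UNIV. U i \<noteq> topspace (discrete_topology UNIV)} \<and>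
          (\<forall>i\<in>UNIV. openin (discrete_topology UNIV) (U i)) \<and> z \<in> Pi\<^sub>E UNIV U \<and> Pi\<^sub>E UNIV U \<subseteq> W"
      using m by (intro exI[of _ U]) simp
  qed
qed


lemma le_star_trans: "le_star a b \<Longrightarrow> le_star b c \<Longrightarrow> le_star a c"
  unfolding le_star_def
  by (rule finite_subset[of _ "{n. a n > b n} \<union> {n. b n > c n}"]) auto

lemma le_star_mono: "(\<And>n. a n \<le> b n) \<Longrightarrow> le_star b c \<Longrightarrow> le_star a c"
  unfolding le_star_def
  by (rule finite_subset[of _ "{n. b n > c n}"]) (auto intro: order.strict_trans2)

lemma lepoll_finite: "B \<lesssim> A \<Longrightarrow> finite A \<Longrightarrow> finite B"
  by (metis finite_surj lepoll_iff)

lemma strict_mono_range_inj: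
  fixes F G :: "nat \<Rightarrow> nat"
  assumes F: "strict_mono F" and G: "strict_mono G" and R: "range F = range G"
  shows "F = G"
proof -
  have "\<forall>m<n. F m = G m" for n
  proof (induction n)
    case 0 then show ?case by simp
  next
    case (Suc n)
    have "F n \<in> range G" using R by auto
    then obtain j where j: "F n = G j" by auto
    have "G n \<in> range F" using R by auto
    then obtain k where k: "G n = F k" by auto
    have "\<not> j < n"
    proof
      assume "j < n" then have "G j = F j" using Suc by simp
      then show False using j \<open>j < n\<close> F by (metis less_irrefl strict_mono_less)
    qed
    then have 1: "G n \<le> F n" using j G by (simp add: strict_mono_less_eq)
    have "\<not> k < n"
    proof
      assume "k < n" then have "G k = F k" using Suc by simp
      then show False using k \<open>k < n\<close> G by (metis less_irrefl strict_mono_less)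
    qed
    then have "F n \<le> G n" using k F by (simp add: strict_mono_less_eq)
    then show ?case using 1 Suc by (simp add: less_Suc_eq)
  qed
  then show ?thesis by auto
qed


lemma cyl_mono: "m \<le> m' \<Longrightarrow> cyl z m' \<subseteq> cyl z m"
  by (auto simp: cyl_def)

lemma cyl_eq: "(\<And>i. i < m \<Longrightarrow> z i = w i) \<Longrightarrow> cyl z m = cyl w m"
  by (auto simp: cyl_def)

lemma subopen_cyl:
  assumes "openin (subtopology cantor_top X) V" "z \<in> V"
  shows "\<exists>m. X \<inter> cyl z m \<subseteq> V"
proof -
  obtain T where T: "openin cantor_top T" "V = T \<inter> X"
    using assms(1) by (auto simp: openin_subtopology)
  then obtain m where "cyl z m \<subseteq> T" using assms(2) open_cantor by blast
  then show ?thesis using T by blast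
qed

fun Gb :: "(nat \<Rightarrow> nat) \<Rightarrow> nat \<Rightarrow> nat" where
  "Gb h 0 = h 0"
| "Gb h (Suc k) = (\<Sum>j\<le>Gb h k. h j)"

lemma gap_bound:
  fixes F :: "nat \<Rightarrow> nat"
  assumes F: "strict_mono F" and H: "\<forall>n. \<exists>i. n \<le> i \<and> i < h n \<and> i \<in> range F"
  shows "F k < Gb h k"
proof (induction k)
  case 0
  obtain i where i: "i < h 0" "i \<in> range F" using H by blast
  then obtain j where "i = F j" by auto
  then have "F 0 \<le> i" using F by (simp add: strict_mono_less_eq)
  then show ?case using i by simp
next
  case (Suc k)
  obtain i where i: "Suc (F k) \<le> i" "i < h (Suc (F k))" "i \<in> range F" using H by blast
  then obtain j where j: "i = F j" by auto
  then have "k < j" using i(1) F by (metis Suc_le_eq strict_mono_less)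
  then have "F (Suc k) \<le> i" using F j by (simp add: Suc_leI strict_mono_less_eq)
  also have "i < h (Suc (F k))" by fact
  also have "h (Suc (F k)) \<le> (\<Sum>j\<le>Gb h k. h j)"
    using Suc.IH by (intro member_le_sum) auto
  finally show ?case by simp
qed

definition ext :: "bool list \<Rightarrow> nat \<Rightarrow> bool" where
  "ext l = (\<lambda>i. i < length l \<and> l ! i)"

lemma finite_lists_le: "finite {l :: bool list. length l \<le> k}"
  using finite_lists_length_le[of "UNIV :: bool set" k] by simp

lemma finite_lists_eq: "finite {l :: bool list. length l = k}"
  using finite_lists_length_eq[of "UNIV :: bool set" k] by simp

locale cov =
  fixes X :: "(nat \<Rightarrow> bool) set" and U :: "nat \<Rightarrow> (nat \<Rightarrow> bool) set set"
  assumes opn: "\<And>n V. V \<in> U n \<Longrightarrow> openin (subtopology cantor_top X) V"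
    and cvr: "\<And>n. \<Union>(U n) = X"
begin

definition good :: "nat \<Rightarrow> nat \<Rightarrow> (nat \<Rightarrow> bool) \<Rightarrow> bool" where
  "good n m z \<longleftrightarrow> (\<exists>V\<in>U n. X \<inter> cyl z m \<subseteq> V)"

lemma good_mono: "good n m z \<Longrightarrow> m \<le> m' \<Longrightarrow> good n m' z"
  unfolding good_def using cyl_mono by blast

lemma good_ex: "z \<in> X \<Longrightarrow> \<exists>m. good n m z"
proof -
  assume "z \<in> X"
  then obtain V where V: "V \<in> U n" "z \<in> V" using cvr by blast
  have "\<exists>m. X \<inter> cyl z m \<subseteq> V" by (rule subopen_cyl[OF opn[OF V(1)] V(2)])
  then obtain m where m: "X \<inter> cyl z m \<subseteq> V" by blast
  have "good n m z" unfolding good_def using V(1) m by blast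
  then show ?thesis by blast
qed

definition gg :: "nat \<Rightarrow> (nat \<Rightarrow> bool) \<Rightarrow> nat" where
  "gg n z = (LEAST m. good n m z)"

lemma gg_good: "z \<in> X \<Longrightarrow> good n (gg n z) z"
  unfolding gg_def using good_ex by (metis LeastI)

lemma menger_from_h:
  assumes "\<forall>z\<in>X. \<exists>n. good n (h n) z"
  shows "\<exists>F. (\<forall>n. finite (F n) \<and> F n \<subseteq> U n) \<and> \<Union>(\<Union>n. F n) = X"
proof -
  define F where "F n = (\<lambda>l. SOME V. V \<in> U n \<and> X \<inter> cyl (ext l) (length l) \<subseteq> V) `
      {l. length l \<le> h n \<and> (\<exists>V\<in>U n. X \<inter> cyl (ext l) (length l) \<subseteq> V)}" for n
  have fin: "finite (F n)" for n
    unfolding F_def by (rule finite_imageI, rule finite_subset[OF _ finite_lists_le[of "h n"]]) auto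
  have sub: "F n \<subseteq> U n" for n
    unfolding F_def
  proof (rule image_subsetI)
    fix l assume "l \<in> {l. length l \<le> h n \<and> (\<exists>V\<in>U n. X \<inter> cyl (ext l) (length l) \<subseteq> V)}"
    then have "\<exists>V. V \<in> U n \<and> X \<inter> cyl (ext l) (length l) \<subseteq> V" by blast
    from someI_ex[OF this] show "(SOME V. V \<in> U n \<and> X \<inter> cyl (ext l) (length l) \<subseteq> V) \<in> U n"
      by (rule conjunct1)
  qed
  have c1: "X \<subseteq> \<Union>(\<Union>n. F n)"
  proof
    fix z assume z: "z \<in> X"
    then obtain n where "good n (h n) z" using assms by blast
    then obtain V where V: "V \<in> U n" "X \<inter> cyl z (h n) \<subseteq> V" unfolding good_def by blast
    define l where "l = map z [0..<h n]"
    have ll: "length l = h n" by (simp add: l_def)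
    have "ext l i = z i" if "i < h n" for i
      using that by (simp add: l_def ext_def)
    then have "cyl (ext l) (h n) = cyl z (h n)" by (rule cyl_eq)
    then have c: "cyl (ext l) (length l) = cyl z (h n)" by (simp only: ll)
    have "X \<inter> cyl (ext l) (length l) \<subseteq> V" using V(2) by (simp only: c)
    then have ex: "\<exists>V. V \<in> U n \<and> X \<inter> cyl (ext l) (length l) \<subseteq> V" using V(1) by blast
    define W where "W = (SOME V. V \<in> U n \<and> X \<inter> cyl (ext l) (length l) \<subseteq> V)"
    have Wp: "W \<in> U n \<and> X \<inter> cyl (ext l) (length l) \<subseteq> W"
      unfolding W_def by (rule someI_ex[OF ex])
    have len: "length l \<le> h n" using ll by simp
    from ex obtain V' where V': "V' \<in> U n" "X \<inter> cyl (ext l) (length l) \<subseteq> V'" by blast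
    have bx: "\<exists>V\<in>U n. X \<inter> cyl (ext l) (length l) \<subseteq> V" using V'(2) V'(1) by (rule bexI)
    have lmem: "l \<in> {l. length l \<le> h n \<and> (\<exists>V\<in>U n. X \<inter> cyl (ext l) (length l) \<subseteq> V)}"
      using len bx by (intro CollectI conjI)
    have WF: "W \<in> F n" unfolding F_def W_def using lmem by (rule imageI)
    have "z \<in> cyl z (h n)" by (simp add: cyl_def)
    then have "z \<in> cyl (ext l) (length l)" by (simp only: c)
    then have "z \<in> X \<inter> cyl (ext l) (length l)" by (rule IntI[OF z])
    then have zW: "z \<in> W" by (rule subsetD[OF conjunct2[OF Wp]])
    show "z \<in> \<Union>(\<Union>n. F n)" by (rule UnionI[OF UN_I[where B=F, OF UNIV_I WF] zW])
  qed
  have c2: "\<Union>(\<Union>n. F n) \<subseteq> X"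
  proof
    fix z assume "z \<in> \<Union>(\<Union>n. F n)"
    then obtain n V where nV: "V \<in> F n" "z \<in> V" by blast
    then have "V \<in> U n" using sub[of n] by blast
    then show "z \<in> X" using cvr[of n] nV(2) by blast
  qed
  have eq: "\<Union>(\<Union>n. F n) = X" by (rule equalityI[OF c2 c1])
  show ?thesis by (rule exI[where x=F]) (simp add: fin sub eq)
qed

definition h1 :: "nat \<Rightarrow> nat" where
  "h1 n = n + Max ((\<lambda>l. gg n (ext l)) ` {l. length l = n})"

lemma gap_good:
  assumes FX: "{z. finite {k. z k}} \<subseteq> X" and z: "z \<in> X"
    and gap: "\<forall>i. n \<le> i \<and> i < h1 n \<longrightarrow> \<not> z i"
  shows "good n (h1 n) z"
proof -
  define l where "l = map z [0..<n]"
  define s where "s = ext l"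
  have ll: "length l = n" by (simp add: l_def)
  have sfin: "{k. s k} \<subseteq> {..<n}" by (auto simp: s_def ext_def ll)
  then have "finite {k. s k}" by (rule finite_subset) simp
  then have sX: "s \<in> X" using FX by blast
  have gs: "good n (gg n s) s" by (rule gg_good[OF sX])
  have "l \<in> {l. length l = n}" using ll by simp
  then have "gg n s \<in> (\<lambda>l. gg n (ext l)) ` {l. length l = n}" unfolding s_def by (rule imageI)
  moreover have "finite ((\<lambda>l. gg n (ext l)) ` {l. length l = n})"
    by (rule finite_imageI[OF finite_lists_eq])
  ultimately have "gg n s \<le> Max ((\<lambda>l. gg n (ext l)) ` {l. length l = n})" by (rule Max_ge[rotated])
  then have le: "gg n s \<le> h1 n" by (simp add: h1_def)
  have agree: "s i = z i" if "i < h1 n" for i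
  proof (cases "i < n")
    case True then show ?thesis by (simp add: s_def ext_def ll l_def)
  next
    case False
    then have "\<not> z i" using gap that by simp
    moreover have "\<not> s i" using False by (simp add: s_def ext_def ll)
    ultimately show ?thesis by simp
  qed
  have "cyl s (gg n s) = cyl z (gg n s)"
    by (rule cyl_eq) (use le agree in simp)
  then have "good n (gg n s) z" using gs by (simp add: good_def)
  then show ?thesis using le by (rule good_mono)
qed

lemma fin_good:
  assumes FX: "{z. finite {k. z k}} \<subseteq> X" and z: "finite {k. z k}"
  shows "\<exists>n. good n (h1 n) z"
proof -
  obtain n where n: "\<forall>k\<in>{k. z k}. k < n" using z finite_nat_bounded by (meson lessThan_iff subsetD)
  have zX: "z \<in> X" using FX z by blast
  have "\<forall>i. n \<le> i \<and> i < h1 n \<longrightarrow> \<not> z i" using n by auto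
  then show ?thesis using gap_good[OF FX zX] by blast
qed

lemma nogap_bound:
  assumes F: "strict_mono F" and H: "\<forall>n. \<exists>i. n \<le> i \<and> i < h1 n \<and> i \<in> range F"
  shows "F k < Gb h1 k"
  by (rule gap_bound[OF F H])

end

lemma card_range_bound:
  fixes F :: "nat \<Rightarrow> nat"
  assumes F: "strict_mono F" and c: "Suc i \<le> card {k\<in>{..<M}. k \<in> range F}"
  shows "F i < M"
proof (rule ccontr)
  assume "\<not> F i < M"
  then have "{k\<in>{..<M}. k \<in> range F} \<subseteq> F ` {..<i}"
  proof (intro subsetI)
    fix k assume k: "k \<in> {k\<in>{..<M}. k \<in> range F}" and iM: "\<not> F i < M"
    then obtain j where j: "k = F j" by blast
    have "F j < F i" using k j iM by simp
    then have "j < i" using F by (simp add: strict_mono_less)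
    then show "k \<in> F ` {..<i}" using j by blast
  qed
  then have "card {k\<in>{..<M}. k \<in> range F} \<le> card (F ` {..<i})" by (rule card_mono[OF finite_imageI[OF finite_lessThan]])
  also have "\<dots> \<le> i" using card_image_le[of "{..<i}" F] by simp
  finally show False using c by simp
qed

lemma card_range_big:
  fixes F :: "nat \<Rightarrow> nat"
  assumes F: "strict_mono F"
  shows "Suc i \<le> card {k\<in>{..<Suc (F i)}. k \<in> range F}"
proof -
  have sub: "F ` {..i} \<subseteq> {k\<in>{..<Suc (F i)}. k \<in> range F}"
  proof
    fix k assume "k \<in> F ` {..i}"
    then obtain j where j: "j \<le> i" "k = F j" by blast
    then have "F j \<le> F i" using F by (simp add: strict_mono_less_eq)
    then show "k \<in> {k\<in>{..<Suc (F i)}. k \<in> range F}" using j by simp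
  qed
  have "inj_on F {..i}" using F strict_mono_imp_inj_on by blast
  then have "card (F ` {..i}) = Suc i" by (simp add: card_image)
  moreover have "card (F ` {..i}) \<le> card {k\<in>{..<Suc (F i)}. k \<in> range F}"
    by (rule card_mono[OF _ sub]) simp
  ultimately show ?thesis by simp
qed

lemma card_M_mono: "(M::nat) \<le> M' \<Longrightarrow> card {k\<in>{..<M}. P k} \<le> card {k\<in>{..<M'}. P k}"
  by (rule card_mono) (auto intro: finite_subset[of _ "{..<M'}"])

lemma open_card: "openin cantor_top {z. Suc i \<le> card {k\<in>{..<M}. z k}}"
  unfolding open_cantor
proof
  fix z assume z: "z \<in> {z. Suc i \<le> card {k\<in>{..<M}. z k}}"
  have "cyl z M \<subseteq> {z. Suc i \<le> card {k\<in>{..<M}. z k}}"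
  proof
    fix y assume y: "y \<in> cyl z M"
    have "{k\<in>{..<M}. y k} = {k\<in>{..<M}. z k}" using y by (auto simp: cyl_def)
    then show "y \<in> {z. Suc i \<le> card {k\<in>{..<M}. z k}}" using z by simp
  qed
  then show "\<exists>m. cyl z m \<subseteq> {z. Suc i \<le> card {k\<in>{..<M}. z k}}" by blast
qed

lemma countable_Fin: "countable {z :: nat \<Rightarrow> bool. finite {k. z k}}"
proof -
  have "{z :: nat \<Rightarrow> bool. finite {k. z k}} \<subseteq> (\<lambda>S k. k \<in> S) ` {S :: nat set. finite S}"
  proof
    fix z :: "nat \<Rightarrow> bool" assume "z \<in> {z. finite {k. z k}}"
    then have "finite {k. z k}" by simp
    moreover have "z = (\<lambda>k. k \<in> {k. z k})" by simp
    ultimately show "z \<in> (\<lambda>S k. k \<in> S) ` {S. finite S}" by blast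
  qed
  moreover have "countable ((\<lambda>S k. k \<in> S) ` {S :: nat set. finite S})"
    by (rule countable_image[OF countable_Collect_finite])
  ultimately show ?thesis by (rule countable_subset)
qed

definition emb :: "(nat \<Rightarrow> nat \<Rightarrow> bool) \<Rightarrow> (nat \<Rightarrow> bool) \<Rightarrow> nat \<Rightarrow> bool" where
  "emb q w = (\<lambda>j. if even j then w (j div 2) else \<not> q (j div 2) j)"

lemma emb_cont: "continuous_map cantor_top cantor_top (emb q)"
  unfolding continuous_map
proof (intro conjI allI impI)
  show "emb q ` topspace cantor_top \<subseteq> topspace cantor_top" by simp
next
  fix W assume W: "openin cantor_top W"
  show "openin cantor_top {x \<in> topspace cantor_top. emb q x \<in> W}"
    unfolding open_cantor
  proof
    fix w assume "w \<in> {x \<in> topspace cantor_top. emb q x \<in> W}"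
    then have "emb q w \<in> W" by simp
    then obtain m where m: "cyl (emb q w) m \<subseteq> W" using W open_cantor by blast
    have "cyl w m \<subseteq> {x \<in> topspace cantor_top. emb q x \<in> W}"
    proof
      fix y assume y: "y \<in> cyl w m"
      have "emb q y \<in> cyl (emb q w) m"
        unfolding cyl_def mem_Collect_eq
      proof (intro allI impI)
        fix j assume j: "j < m"
        then have "j div 2 < m" by simp
        then have "y (j div 2) = w (j div 2)" using y by (simp add: cyl_def)
        then show "emb q y j = emb q w j" by (simp add: emb_def)
      qed
      then show "y \<in> {x \<in> topspace cantor_top. emb q x \<in> W}" using m by auto
    qed
    then show "\<exists>m. cyl w m \<subseteq> {x \<in> topspace cantor_top. emb q x \<in> W}" by blast
  qed
qed

lemma emb_inj: "inj (emb q)"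
proof (rule injI)
  fix w w' assume e: "emb q w = emb q w'"
  show "w = w'"
  proof
    fix k
    have "emb q w (2 * k) = emb q w' (2 * k)" using e by simp
    then show "w k = w' k" by (simp add: emb_def)
  qed
qed

lemma emb_avoid: "emb q w \<noteq> q k"
proof
  assume "emb q w = q k"
  then have "emb q w (2 * k + 1) = q k (2 * k + 1)" by simp
  then show False by (simp add: emb_def)
qed

lemma avoid_countable:
  assumes "countable Q"
  shows "\<exists>e. continuous_map cantor_top cantor_top e \<and> inj e \<and> (\<forall>w. e w \<notin> Q)"
proof (cases "Q = {}")
  case True
  then show ?thesis using emb_cont emb_inj by blast
next
  case False
  define q where "q = from_nat_into Q"
  have Q: "Q = range q" unfolding q_def using False assms by simp
  have "\<forall>w. emb q w \<notin> Q" unfolding Q using emb_avoid by (metis imageE)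
  then show ?thesis using emb_cont emb_inj by blast
qed

lemma fun_lepoll: "(UNIV :: (nat \<Rightarrow> nat) set) \<lesssim> (UNIV :: (nat \<Rightarrow> bool) set)"
  unfolding lepoll_def
proof (intro exI conjI)
  define c where "c f = (\<lambda>k. snd (prod_decode k) = f (fst (prod_decode k)))" for f :: "nat \<Rightarrow> nat"
  show "inj_on c UNIV"
  proof (rule inj_onI)
    fix f g assume e: "c f = c g"
    show "f = g"
    proof
      fix n
      have "c f (prod_encode (n, f n))" by (simp add: c_def)
      then have "c g (prod_encode (n, f n))" using e by simp
      then show "f n = g n" by (simp add: c_def)
    qed
  qed
  show "c ` UNIV \<subseteq> UNIV" by simp
qed

locale domin =
  fixes D :: "(nat \<Rightarrow> nat) set"
  assumes dm: "dominating_min D"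
begin

definition small :: "(nat \<Rightarrow> nat) set \<Rightarrow> bool" where
  "small S \<longleftrightarrow> \<not> D \<lesssim> S"

lemma small_not_dom: "small S \<Longrightarrow> \<exists>f. \<forall>g\<in>S. \<not> le_star f g"
  using dm unfolding small_def dominating_min_def dominating_def by blast

lemma small_subset: "small S \<Longrightarrow> T \<subseteq> S \<Longrightarrow> small T"
  unfolding small_def by (meson lepoll_trans subset_imp_lepoll)

lemma small_image_gen: "\<not> D \<lesssim> S \<Longrightarrow> small (h ` S)"
  unfolding small_def by (meson image_lepoll lepoll_trans)

lemma D_dom: "dominating D" using dm by (simp add: dominating_min_def)

lemma D_infinite: "infinite D"
proof
  assume fin: "finite D"
  define f where "f n = Suc (\<Sum>g\<in>D. g n)" for n
  obtain g where g: "g \<in> D" "le_star f g" using D_dom unfolding dominating_def by blast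
  have "g n < f n" for n
    using member_le_sum[of g D "\<lambda>g. g n"] fin g(1) by (simp add: f_def)
  then have "{n. f n > g n} = UNIV" by auto
  then show False using g(2) by (simp add: le_star_def)
qed

lemma small_insert: "small S \<Longrightarrow> small (insert b S)"
proof (cases "finite S")
  case True
  assume "small S"
  show ?thesis unfolding small_def
    using D_infinite True lepoll_finite by blast
next
  case False
  assume "small S"
  then show ?thesis unfolding small_def
    using infinite_insert_lepoll[OF False] lepoll_trans by blast
qed

abbreviation "r \<equiv> card_of D"

lemma small_underS: "a \<in> D \<Longrightarrow> small (underS r a)"
proof -
  assume a: "a \<in> D"
  have "(card_of (underS r a), r) \<in> ordLess"
    using card_of_underS[OF card_of_Card_order] a by (simp add: Field_card_of)
  then have "(r, card_of (underS r a)) \<notin> ordLeq" using not_ordLess_ordLeq by blast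
  then show ?thesis unfolding small_def lepoll_def using card_of_ordLeq by blast
qed

definition phi :: "(nat \<Rightarrow> nat) \<Rightarrow> nat \<Rightarrow> nat" where
  "phi a = (SOME f. \<forall>g\<in>underS r a. \<not> le_star f g)"

lemma phi:
  assumes a: "a \<in> D" and g: "g \<in> underS r a"
  shows "\<not> le_star (phi a) g"
proof -
  obtain f where f: "\<forall>g\<in>underS r a. \<not> le_star f g"
    using small_not_dom[OF small_underS[OF a]] by blast
  then have "\<forall>g\<in>underS r a. \<not> le_star (phi a) g" unfolding phi_def by (rule someI[where P="\<lambda>f. \<forall>g\<in>underS r a. \<not> le_star f g"])
  then show ?thesis using g by blast
qed

definition ee :: "(nat \<Rightarrow> nat) \<Rightarrow> nat \<Rightarrow> nat" where
  "ee a n = prod_encode (phi a n, a n)"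

definition Fs :: "(nat \<Rightarrow> nat) \<Rightarrow> nat \<Rightarrow> nat" where
  "Fs a n = (\<Sum>i\<le>n. Suc (ee a i))"

lemma Fs_0: "Fs a 0 = Suc (ee a 0)" by (simp add: Fs_def)
lemma Fs_Suc: "Fs a (Suc n) = Fs a n + Suc (ee a (Suc n))" by (simp add: Fs_def)

lemma Fs_mono: "strict_mono (Fs a)"
  by (rule strict_mono_Suc_iff[THEN iffD2]) (simp add: Fs_Suc)

lemma phi_le_Fs: "phi a n \<le> Fs a n"
proof -
  have "phi a n \<le> ee a n" by (simp add: ee_def le_prod_encode_1)
  also have "ee a n < Fs a n" by (cases n) (auto simp: Fs_0 Fs_Suc)
  finally show ?thesis by simp
qed

lemma Fs_key: "a \<in> D \<Longrightarrow> g \<in> underS r a \<Longrightarrow> \<not> le_star (Fs a) g"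
  using phi le_star_mono phi_le_Fs by blast

lemma Fs_inj: assumes "Fs a = Fs b" shows "a = b"
proof
  fix n
  have "ee a n = ee b n"
  proof (cases n)
    case 0 then show ?thesis using assms Fs_0 by (metis Suc_inject)
  next
    case (Suc m) then show ?thesis using assms Fs_Suc by (metis add_left_cancel Suc_inject)
  qed
  then show "a n = b n" unfolding ee_def by (metis prod_encode_eq prod.inject)
qed

definition xs :: "(nat \<Rightarrow> nat) \<Rightarrow> nat \<Rightarrow> bool" where
  "xs a = (\<lambda>k. k \<in> range (Fs a))"

lemma xs_inj: "xs a = xs b \<Longrightarrow> a = b"
proof -
  assume "xs a = xs b"
  then have "range (Fs a) = range (Fs b)" unfolding xs_def by (metis Collect_mem_eq)
  then show "a = b" using strict_mono_range_inj[OF Fs_mono Fs_mono] Fs_inj by blast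
qed

lemma xs_infinite: "infinite {k. xs a k}"
  unfolding xs_def using Fs_mono strict_mono_imp_inj_on range_inj_infinite
  by (metis Collect_mem_eq)

lemma small_le: "small {a \<in> D. le_star (Fs a) G}"
proof -
  obtain b where b: "b \<in> D" "le_star G b" using D_dom unfolding dominating_def by blast
  have "{a \<in> D. le_star (Fs a) G} \<subseteq> insert b (underS r b)"
  proof
    fix a assume a: "a \<in> {a \<in> D. le_star (Fs a) G}"
    then have la: "le_star (Fs a) b" using b le_star_trans by blast
    show "a \<in> insert b (underS r b)"
    proof (rule ccontr)
      assume n: "a \<notin> insert b (underS r b)"
      have tot: "(a, b) \<in> r \<or> (b, a) \<in> r"
        using card_of_Well_order a b(1)
        by (metis Field_card_of mem_Collect_eq n insertI1 wo_rel.TOTALS wo_rel_def)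
      have "b \<in> underS r a" using tot n a by (auto simp: underS_def)
      then show False using Fs_key a la by blast
    qed
  qed
  then show ?thesis using small_insert[OF small_underS[OF b(1)]] small_subset by blast
qed

definition Fin :: "(nat \<Rightarrow> bool) set" where
  "Fin = {z. finite {k. z k}}"

definition XA :: "(nat \<Rightarrow> nat) set \<Rightarrow> (nat \<Rightarrow> bool) set" where
  "XA A = Fin \<union> xs ` A"

lemma menger_XA:
  assumes AD: "A \<subseteq> D"
  shows "menger_space (subtopology cantor_top (XA A))"
  unfolding menger_space_def
proof (intro allI impI)
  let ?X = "XA A"
  fix U :: "nat \<Rightarrow> (nat \<Rightarrow> bool) set set"
  assume cv: "\<forall>n. (\<forall>V\<in>U n. openin (subtopology cantor_top ?X) V) \<and> \<Union>(U n) = topspace (subtopology cantor_top ?X)"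
  have tsp: "topspace (subtopology cantor_top ?X) = ?X" by (simp add: topspace_subtopology)
  interpret C: cov ?X U
  proof
    fix n V assume "V \<in> U n" then show "openin (subtopology cantor_top ?X) V" using cv by blast
  next
    fix n show "\<Union>(U n) = ?X" using cv tsp by simp
  qed
  have FX: "{z. finite {k. z k}} \<subseteq> ?X" by (auto simp: XA_def Fin_def)
  define G where "G = Gb C.h1"
  define E where "E = {a \<in> A. le_star (Fs a) G}"
  have smE: "small E"
    by (rule small_subset[OF small_le[of G]]) (use AD in \<open>auto simp: E_def\<close>)
  then have "\<not> D \<lesssim> E" by (simp add: small_def)
  then have "small ((\<lambda>a. \<lambda>n. C.gg n (xs a)) ` E)" by (rule small_image_gen)
  then obtain h2 where h2: "\<forall>g\<in>(\<lambda>a. \<lambda>n. C.gg n (xs a)) ` E. \<not> le_star h2 g"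
    using small_not_dom by blast
  define h where "h n = C.h1 n + h2 n" for n
  have "\<forall>z\<in>?X. \<exists>n. C.good n (h n) z"
  proof
    fix z assume zX: "z \<in> ?X"
    show "\<exists>n. C.good n (h n) z"
    proof (cases "z \<in> Fin")
      case True
      then obtain n where "C.good n (C.h1 n) z" using C.fin_good[OF FX] by (auto simp: Fin_def)
      then have "C.good n (h n) z" by (rule C.good_mono) (simp add: h_def)
      then show ?thesis by blast
    next
      case False
      then obtain a where a: "a \<in> A" "z = xs a" using zX by (auto simp: XA_def)
      show ?thesis
      proof (cases "a \<in> E")
        case True
        then have "\<not> le_star h2 (\<lambda>n. C.gg n (xs a))" using h2 by blast
        then have "infinite {n. h2 n > C.gg n (xs a)}" by (simp add: le_star_def)
        then obtain n where n: "h2 n > C.gg n z" using a(2) by (metis (no_types, lifting) empty_Collect_eq finite.emptyI)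
        have "C.good n (C.gg n z) z" by (rule C.gg_good[OF zX])
        then have "C.good n (h n) z" by (rule C.good_mono) (use n in \<open>simp add: h_def\<close>)
        then show ?thesis by blast
      next
        case False
        then have nl: "\<not> le_star (Fs a) G" using a(1) by (simp add: E_def)
        have "\<not> (\<forall>n. \<exists>i. n \<le> i \<and> i < C.h1 n \<and> i \<in> range (Fs a))"
        proof
          assume H: "\<forall>n. \<exists>i. n \<le> i \<and> i < C.h1 n \<and> i \<in> range (Fs a)"
          have "Fs a k < G k" for k unfolding G_def by (rule C.nogap_bound[OF Fs_mono H])
          then have "{n. Fs a n > G n} = {}" by (simp add: not_less_iff_gr_or_eq less_imp_le leD)
          then have "le_star (Fs a) G" by (simp add: le_star_def)
          then show False using nl by simp
        qed
        then obtain n where n: "\<forall>i. n \<le> i \<and> i < C.h1 n \<longrightarrow> \<not> z i"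
          using a(2) by (auto simp: xs_def)
        have "C.good n (C.h1 n) z" by (rule C.gap_good[OF FX zX n])
        then have "C.good n (h n) z" by (rule C.good_mono) (simp add: h_def)
        then show ?thesis by blast
      qed
    qed
  qed
  then have "\<exists>F. (\<forall>n. finite (F n) \<and> F n \<subseteq> U n) \<and> \<Union>(\<Union>n. F n) = ?X"
    by (rule C.menger_from_h)
  then show "\<exists>F. (\<forall>n. finite (F n) \<and> F n \<subseteq> U n) \<and> \<Union>(\<Union>n. F n) = topspace (subtopology cantor_top ?X)"
    by (simp only: tsp)
qed

lemma XA_inj:
  assumes "A \<subseteq> D" "B \<subseteq> D" "XA A = XA B"
  shows "A \<subseteq> B"
proof
  fix a assume a: "a \<in> A"
  then have "xs a \<in> XA B" using assms(3) by (auto simp: XA_def)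
  moreover have "xs a \<notin> Fin" using xs_infinite by (simp add: Fin_def)
  ultimately obtain b where "b \<in> B" "xs a = xs b" by (auto simp: XA_def)
  then show "a \<in> B" using xs_inj by blast
qed

lemma compact_bound:
  assumes cont: "continuous_map cantor_top cantor_top P" and P: "\<And>w. P w \<in> range xs"
  shows "\<exists>G. \<forall>w a. P w = xs a \<longrightarrow> (\<forall>i. Fs a i < G i)"
proof -
  have "\<exists>M. \<forall>w a. P w = xs a \<longrightarrow> Fs a i < M" for i
  proof -
    define Op where "Op M = {w \<in> topspace cantor_top. P w \<in> {z. Suc i \<le> card {k\<in>{..<M}. z k}}}" for M
    have opO: "openin cantor_top (Op M)" for M
      unfolding Op_def by (rule openin_continuous_map_preimage[OF cont open_card])
    have cvO: "topspace cantor_top \<subseteq> \<Union>(range Op)"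
    proof
      fix w assume "w \<in> topspace cantor_top"
      obtain a where a: "P w = xs a" using P by blast
      have "Suc i \<le> card {k\<in>{..<Suc (Fs a i)}. k \<in> range (Fs a)}"
        by (rule card_range_big[OF Fs_mono])
      then have "w \<in> Op (Suc (Fs a i))" by (simp add: Op_def a xs_def)
      then show "w \<in> \<Union>(range Op)" by blast
    qed
    obtain FF where FF: "finite FF" "FF \<subseteq> range Op" "topspace cantor_top \<subseteq> \<Union>FF"
      using compact_cantor[unfolded compact_space_alt, rule_format, of "range Op"] opO cvO by blast
    obtain S where S: "finite S" "FF = Op ` S" using finite_subset_image[OF FF(1) FF(2)] by blast
    define M0 where "M0 = (\<Sum>m\<in>S. m)"
    have Omono: "Op m \<subseteq> Op m'" if "m \<le> m'" for m m'
      unfolding Op_def using card_M_mono[OF that] order_trans by fastforce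
    have all: "w \<in> Op M0" for w
    proof -
      have "w \<in> \<Union>FF" using FF(3) by (simp add: subset_eq)
      then obtain m where "m \<in> S" "w \<in> Op m" using S(2) by blast
      moreover have "m \<le> M0" unfolding M0_def using member_le_sum[of m S "\<lambda>x. x"] \<open>m \<in> S\<close> S(1) by simp
      ultimately show ?thesis using Omono by blast
    qed
    have "Fs a i < M0" if "P w = xs a" for w a
    proof -
      have "Suc i \<le> card {k\<in>{..<M0}. P w k}" using all[of w] by (simp add: Op_def)
      then have "Suc i \<le> card {k\<in>{..<M0}. k \<in> range (Fs a)}" using that by (simp add: xs_def)
      then show ?thesis by (rule card_range_bound[OF Fs_mono])
    qed
    then show ?thesis by blast
  qed
  then have "\<forall>i. \<exists>M. \<forall>w a. P w = xs a \<longrightarrow> Fs a i < M" by blast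
  then obtain G where "\<forall>i. \<forall>w a. P w = xs a \<longrightarrow> Fs a i < G i" by (rule choice[THEN exE])
  then show ?thesis by blast
qed

lemma totimp_XA:
  assumes AD: "A \<subseteq> D"
  shows "totally_imperfect (XA A)"
  unfolding totally_imperfect_def
proof
  assume "\<exists>Y. Y \<subseteq> XA A \<and> subtopology cantor_top Y homeomorphic_space cantor_top"
  then obtain Y f g where Y: "Y \<subseteq> XA A" and hm: "homeomorphic_maps (subtopology cantor_top Y) cantor_top f g"
    unfolding homeomorphic_space_def by blast
  have gc: "continuous_map cantor_top (subtopology cantor_top Y) g" using hm by (simp add: homeomorphic_maps_def)
  have fg: "\<And>y. f (g y) = y" using hm by (simp add: homeomorphic_maps_def)
  have gY: "g y \<in> Y" for y
    using continuous_map_image_subset_topspace[OF gc] by (auto simp: topspace_subtopology)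
  have gc2: "continuous_map cantor_top cantor_top g" by (rule continuous_map_into_fulltopology[OF gc])
  define Q where "Q = {c. g c \<in> Fin}"
  have "Q \<subseteq> f ` Fin"
  proof
    fix c assume "c \<in> Q" then have "g c \<in> Fin" by (simp add: Q_def)
    moreover have "c = f (g c)" using fg by simp
    ultimately show "c \<in> f ` Fin" by blast
  qed
  moreover have "countable (f ` Fin)" using countable_Fin by (simp add: Fin_def)
  ultimately have "countable Q" by (rule countable_subset)
  then obtain e where e: "continuous_map cantor_top cantor_top e" "inj e" "\<And>w. e w \<notin> Q"
    using avoid_countable by blast
  define P where "P = g \<circ> e"
  have Pc: "continuous_map cantor_top cantor_top P" unfolding P_def by (rule continuous_map_compose[OF e(1) gc2])
  have Pinj: "inj P" unfolding P_def
  proof (rule inj_compose[OF _ e(2)])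
    show "inj g" by (rule inj_on_inverseI[where g=f]) (simp add: fg)
  qed
  have PA: "P w \<in> xs ` A" for w
  proof -
    have "P w \<in> XA A" using gY Y by (simp add: P_def subsetD)
    moreover have "P w \<notin> Fin" using e(3)[of w] by (simp add: P_def Q_def)
    ultimately show ?thesis by (simp add: XA_def)
  qed
  then have "\<And>w. P w \<in> range xs" by blast
  then obtain G where G: "\<forall>w a. P w = xs a \<longrightarrow> (\<forall>i. Fs a i < G i)"
    using compact_bound[OF Pc] by blast
  define E where "E = {a \<in> D. le_star (Fs a) G}"
  have "range P \<subseteq> xs ` E"
  proof
    fix z assume "z \<in> range P"
    then obtain w where w: "z = P w" by blast
    then obtain a where a: "a \<in> A" "P w = xs a" using PA by blast
    then have "\<forall>i. Fs a i < G i" using G by blast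
    then have "{n. Fs a n > G n} = {}" by (auto dest: less_asym)
    then have "le_star (Fs a) G" by (simp add: le_star_def)
    then have "a \<in> E" using a(1) AD by (auto simp: E_def)
    then show "z \<in> xs ` E" using w a(2) by blast
  qed
  then have "(UNIV :: (nat \<Rightarrow> bool) set) \<lesssim> xs ` E"
    unfolding lepoll_def using Pinj by blast
  also have "xs ` E \<lesssim> E" by (rule image_lepoll)
  finally have UE: "(UNIV :: (nat \<Rightarrow> bool) set) \<lesssim> E" .
  have dU: "D \<lesssim> (UNIV :: (nat \<Rightarrow> nat) set)" by (rule subset_imp_lepoll) simp
  have "D \<lesssim> E" by (rule lepoll_trans[OF lepoll_trans[OF dU fun_lepoll] UE])
  moreover have "small E" unfolding E_def by (rule small_le)
  ultimately show False by (simp add: small_def)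
qed

end

theorem mainTheorem10:
  fixes D :: "(nat \<Rightarrow> nat) set"
  assumes "dominating_min D"
  shows "Pow D \<lesssim> {X :: (nat \<Rightarrow> bool) set.
            totally_imperfect X \<and> menger_space (subtopology cantor_top X)}"
proof -
  interpret domin D by (rule domin.intro[OF assms])
  show ?thesis
    unfolding lepoll_def
  proof (intro exI conjI)
    show "inj_on XA (Pow D)"
      by (rule inj_onI) (auto dest: XA_inj intro: subset_antisym)
    show "XA ` Pow D \<subseteq> {X. totally_imperfect X \<and> menger_space (subtopology cantor_top X)}"
      using totimp_XA menger_XA by blast
  qed
qed

end
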